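(* Let $N\ge0$ be an integer and $s,t,S$ be numbers with $s-S\in\mathbb{Z}$. Define, for $T\in t+\mathbb{Z}$, $$R^{(s,t)}_{(S,T)}(N)=\frac{(-1)^{t-T+N}N!}{(s-S+N)!\,(t-T+N)!\,(S-s+T-t-N)!},$$ with the convention that it is $0$ if any factorial argument is negative. Then $$\sum_{T\in t+\mathbb{Z}}R^{(s,t)}_{(S,T)}(N)=\delta_{s,S}.$$ *)

theory Defs
  imports "HOL-Analysis.Analysis"
begin

text \<open>The integer represented by a complex number (meaningful when the number lies in \<int>).\<close>
definition to_int :: "complex \<Rightarrow> int" where
  "to_int z = (THE k::int. z = of_int k)"

definition Rcoef :: "complex \<Rightarrow> complex \<Rightarrow> complex \<Rightarrow> complex \<Rightarrow> nat \<Rightarrow> real" where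
  "Rcoef s t S T N =
     (let a = to_int (s - S + of_nat N);
          b = to_int (t - T + of_nat N);
          c = to_int (S - s + T - t - of_nat N)
      in if a < 0 \<or> b < 0 \<or> c < 0 then 0
         else (-1) ^ nat b * fact N / (fact (nat a) * fact (nat b) * fact (nat c)))"

end

theory Submission
  imports Defs
begin

lemma to_int_of_int[simp]: "to_int (of_int k) = k"
  unfolding to_int_def by (rule the_equality) (auto simp: of_int_eq_iff)

lemma Rcoef_eval:
  assumes "s - S = of_int d"
  shows "Rcoef s t S (t + of_int k) N =
    (if d + int N < 0 \<or> int N - k < 0 \<or> k - d - int N < 0 then 0
     else (-1) ^ nat (int N - k) * fact N / (fact (nat (d + int N)) * fact (nat (int N - k)) * fact (nat (k - d - int N))))"
proof -
  have S: "S = s - of_int d" using assms by (simp add: algebra_simps)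
  have e1: "s - S + of_nat N = (of_int (d + int N) :: complex)" using S by simp
  have e2: "t - (t + of_int k) + of_nat N = (of_int (int N - k) :: complex)" by simp
  have e3: "S - s + (t + of_int k) - t - of_nat N = (of_int (k - d - int N) :: complex)" using S by simp
  show ?thesis unfolding Rcoef_def Let_def e1 e2 e3 to_int_of_int by simp
qed

theorem mainTheorem11:
  fixes s t S :: complex and N :: nat
  assumes "s - S \<in> \<int>"
  shows "((\<lambda>T. Rcoef s t S T N) has_sum (if s = S then 1 else 0)) {T. T - t \<in> \<int>}"
proof -
  obtain d where d: "s - S = of_int d" using assms Ints_cases by blast
  have memA: "\<exists>k. T = t + of_int k" if "T \<in> {T. T - t \<in> \<int>}" for T
  proof -
    from that obtain k where "T - t = of_int k" using Ints_cases by auto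
    then show ?thesis by (intro exI[of _ k]) (simp add: algebra_simps)
  qed
  have sS: "s = S \<longleftrightarrow> d = 0" using d by auto
  show ?thesis
  proof (cases "d > 0")
    case True
    have "((\<lambda>T. Rcoef s t S T N) has_sum 0) {T. T - t \<in> \<int>}"
    proof (rule has_sum_0)
      fix T assume "T \<in> {T. T - t \<in> \<int>}"
      then obtain k where k: "T = t + of_int k" using memA by blast
      show "Rcoef s t S T N = 0" unfolding k Rcoef_eval[OF d] using True by auto
    qed
    then show ?thesis using sS True by simp
  next
    case False
    define M where "M = nat (- d)"
    have dM: "d = - int M" using False M_def by simp
    define g where "g = (\<lambda>i::nat. t + of_int (int N - int i))"
    have injg: "inj_on g {..M}" unfolding g_def inj_on_def by simp
    have gterm: "Rcoef s t S (g i) N =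
        (if N < M then 0 else (-1) ^ i * fact N / (fact (N - M) * fact i * fact (M - i)))"
      if "i \<le> M" for i
    proof -
      have "Rcoef s t S (g i) N = Rcoef s t S (t + of_int (int N - int i)) N" by (simp add: g_def)
      also have "\<dots> = (if N < M then 0 else (-1) ^ i * fact N / (fact (N - M) * fact i * fact (M - i)))"
        unfolding Rcoef_eval[OF d] using that dM
        by (auto simp: nat_diff_distrib of_nat_diff)
      finally show ?thesis .
    qed
    show ?thesis
    proof (rule has_sum_finite_neutralI[where B = "g ` {..M}"])
      show "finite (g ` {..M})" by simp
      show "g ` {..M} \<subseteq> {T. T - t \<in> \<int>}" unfolding g_def by auto
      show "Rcoef s t S x N = 0" if "x \<in> {T. T - t \<in> \<int>} - g ` {..M}" for x
      proof -
        from that obtain k where k: "x = t + of_int k" using memA by blast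
        have "\<not> (int N - k \<ge> 0 \<and> int N - k \<le> int M)"
        proof
          assume h: "int N - k \<ge> 0 \<and> int N - k \<le> int M"
          then have "x = g (nat (int N - k))" "nat (int N - k) \<in> {..M}"
            unfolding k g_def by auto
          then show False using that by auto
        qed
        then show ?thesis unfolding k Rcoef_eval[OF d] using dM by auto
      qed
      have "(\<Sum>x\<in>g ` {..M}. Rcoef s t S x N) = (\<Sum>i\<le>M. Rcoef s t S (g i) N)"
        by (rule sum.reindex[OF injg, unfolded comp_def])
      also have "\<dots> = (\<Sum>i\<le>M. (if N < M then 0 else (-1) ^ i * fact N / (fact (N - M) * fact i * fact (M - i))))"
        by (rule sum.cong) (auto simp: gterm)
      also have "\<dots> = (if s = S then 1 else 0)"
      proof (cases "N < M")
        case True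
        then show ?thesis using sS dM by auto
      next
        case nl: False
        have "(\<Sum>i\<le>M. (-1) ^ i * fact N / (fact (N - M) * fact i * fact (M - i)) :: real)
            = (\<Sum>i\<le>M. (fact N / (fact (N - M) * fact M)) * ((-1) ^ i * of_nat (M choose i)))"
        proof (rule sum.cong)
          fix i assume "i \<in> {..M}"
          then have "i \<le> M" by simp
          then show "(-1) ^ i * fact N / (fact (N - M) * fact i * fact (M - i)) =
              (fact N / (fact (N - M) * fact M)) * ((-1) ^ i * (of_nat (M choose i) :: real))"
            by (simp add: binomial_fact field_simps)
        qed simp
        also have "\<dots> = (fact N / (fact (N - M) * fact M)) * (\<Sum>i\<le>M. (-1) ^ i * of_nat (M choose i))"
          by (simp add: sum_distrib_left)
        also have "\<dots> = (if s = S then 1 else 0)"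
        proof (cases "M = 0")
          case True then show ?thesis using sS dM by simp
        next
          case False then show ?thesis using sS dM by (simp add: choose_alternating_sum)
        qed
        finally show ?thesis using nl by simp
      qed
      finally show "(if s = S then 1 else 0) = (\<Sum>x\<in>g ` {..M}. Rcoef s t S x N)" by simp
    qed
  qed
qed

end
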